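(* Let $A,B\in\mathcal{M}_d(\mathbb{C})$ with $\operatorname{diag}(A)=\operatorname{diag}(B)$, such that $A$ is entrywise nonnegative, $B$ is positive semidefinite, and $A_{ij}A_{ji}\ge|B_{ij}|^2$ for all $i,j$. If moreover $B$ is diagonally dominant, then $(A,B)\in\mathsf{PCP}_d^2$.
   Context: $B$ is diagonally dominant if $|B_{ii}|\ge\sum_{j\ne i}|B_{ij}|$ and $|B_{ii}|\ge\sum_{j\ne i}|B_{ji}|$ for all $i$. For $v\in\mathbb{C}^d$, $\sigma(v)$ is the number of nonzero coordinates; $\odot$ is the entrywise product, $\bar v$ the entrywise conjugate. $(A,B)\in\mathsf{PCP}_d^2$ means there are finitely many vectors $v_n,w_n\in\mathbb{C}^d$ with $\sigma(v_n\odot w_n)\le2$ for all $n$, $A=\sum_n|v_n\odot\bar v_n\rangle\langle w_n\odot\bar w_n|$ and $B=\sum_n|v_n\odot w_n\rangle\langle v_n\odot w_n|$. *)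

theory Defs
  imports "HOL-Analysis.Analysis"
begin

definition nonneg_entrywise :: "complex^'d^'d \<Rightarrow> bool" where
  "nonneg_entrywise A \<longleftrightarrow> (\<forall>i j. A$i$j \<in> \<real> \<and> Re (A$i$j) \<ge> 0)"

definition psd :: "complex^'d^'d::finite \<Rightarrow> bool" where
  "psd B \<longleftrightarrow> (\<forall>x::complex^'d. let q = (\<Sum>i\<in>UNIV. \<Sum>j\<in>UNIV. cnj (x$i) * B$i$j * x$j)
                                  in q \<in> \<real> \<and> Re q \<ge> 0)"

definition diag_dominant :: "complex^'d^'d::finite \<Rightarrow> bool" where
  "diag_dominant B \<longleftrightarrow> (\<forall>i. cmod (B$i$i) \<ge> (\<Sum>j\<in>UNIV-{i}. cmod (B$i$j))
                           \<and> cmod (B$i$i) \<ge> (\<Sum>j\<in>UNIV-{i}. cmod (B$j$i)))"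

definition sigma :: "complex^'d::finite \<Rightarrow> nat" where
  "sigma v = card {i. v$i \<noteq> 0}"

definition hadamard :: "complex^'d \<Rightarrow> complex^'d \<Rightarrow> complex^'d" where
  "hadamard v w = (\<chi> i. v$i * w$i)"

definition vconj :: "complex^'d \<Rightarrow> complex^'d" where
  "vconj v = (\<chi> i. cnj (v$i))"

definition outer :: "complex^'d \<Rightarrow> complex^'d \<Rightarrow> complex^'d^'d" where
  "outer x y = (\<chi> i j. x$i * cnj (y$j))"

definition PCP2 :: "complex^'d^'d::finite \<Rightarrow> complex^'d^'d \<Rightarrow> bool" where
  "PCP2 A B \<longleftrightarrow> (\<exists>vws :: ((complex^'d) \<times> (complex^'d)) list.
      (\<forall>(v,w)\<in>set vws. sigma (hadamard v w) \<le> 2) \<and>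
      A = sum_list (map (\<lambda>(v,w). outer (hadamard v (vconj v)) (hadamard w (vconj w))) vws) \<and>
      B = sum_list (map (\<lambda>(v,w). outer (hadamard v w) (hadamard v w)) vws))"

end

theory Submission
  imports Defs
begin


lemma PCP2_zero: "PCP2 0 0"
  unfolding PCP2_def by (rule exI[of _ "[]"]) simp

lemma PCP2_add:
  assumes "PCP2 A B" "PCP2 A' B'"
  shows "PCP2 (A + A') (B + B')"
proof -
  obtain xs where xs: "\<forall>(v,w)\<in>set xs. sigma (hadamard v w) \<le> 2"
    "A = sum_list (map (\<lambda>(v,w). outer (hadamard v (vconj v)) (hadamard w (vconj w))) xs)"
    "B = sum_list (map (\<lambda>(v,w). outer (hadamard v w) (hadamard v w)) xs)"
    using assms(1) unfolding PCP2_def by blast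
  obtain ys where ys: "\<forall>(v,w)\<in>set ys. sigma (hadamard v w) \<le> 2"
    "A' = sum_list (map (\<lambda>(v,w). outer (hadamard v (vconj v)) (hadamard w (vconj w))) ys)"
    "B' = sum_list (map (\<lambda>(v,w). outer (hadamard v w) (hadamard v w)) ys)"
    using assms(2) unfolding PCP2_def by blast
  show ?thesis unfolding PCP2_def
    by (rule exI[of _ "xs @ ys"]) (use xs ys in auto)
qed

lemma PCP2_sum:
  assumes "finite S" "\<And>x. x \<in> S \<Longrightarrow> PCP2 (f x) (g x)"
  shows "PCP2 (sum f S) (sum g S)"
  using assms by (induction S rule: finite_induct) (auto intro: PCP2_add PCP2_zero)

lemma PCP2_single:
  assumes "sigma (hadamard v w) \<le> 2"
  shows "PCP2 (outer (hadamard v (vconj v)) (hadamard w (vconj w))) (outer (hadamard v w) (hadamard v w))"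
  unfolding PCP2_def by (rule exI[of _ "[(v,w)]"]) (use assms in auto)

lemma outerA_entry:
  "outer (hadamard v (vconj v)) (hadamard w (vconj w)) $k$l = complex_of_real ((cmod (v$k))\<^sup>2 * (cmod (w$l))\<^sup>2)"
  unfolding outer_def hadamard_def vconj_def
  by (simp add: complex_norm_square[symmetric])

lemma outerB_entry:
  "outer (hadamard v w) (hadamard v w) $k$l = v$k * w$k * cnj (v$l * w$l)"
  unfolding outer_def hadamard_def by simp

lemma sigma_le2:
  assumes "\<And>k. x$k \<noteq> 0 \<Longrightarrow> k = i \<or> k = j"
  shows "sigma x \<le> 2"
proof -
  have "{k. x$k \<noteq> 0} \<subseteq> {i,j}" using assms by auto
  then have "card {k. x$k \<noteq> 0} \<le> card {i,j}" by (intro card_mono) auto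
  also have "\<dots> \<le> 2" by (simp add: card_insert_if)
  finally show ?thesis unfolding sigma_def .
qed

lemma L1:
  fixes f :: "'d::finite \<Rightarrow> 'd \<Rightarrow> 'a::comm_monoid_add"
  shows "(\<Sum>i\<in>UNIV. \<Sum>j\<in>UNIV. if i = j then 0 else (if k = i \<and> l = j then f i j else 0)) = (if k = l then 0 else f k l)"
proof -
  have "(\<Sum>j\<in>UNIV. if i = j then 0 else (if k = i \<and> l = j then f i j else 0)) = (if i = k then (if k = l then 0 else f k l) else 0)" for i
  proof -
    have "(\<Sum>j\<in>UNIV. if i = j then 0 else (if k = i \<and> l = j then f i j else 0)) = (\<Sum>j\<in>UNIV. if j = l then (if i = k \<and> i \<noteq> l then f i l else 0) else 0)"
      by (rule sum.cong) auto
    then show ?thesis by simp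
  qed
  then show ?thesis by simp
qed

lemma L2:
  fixes f :: "'d::finite \<Rightarrow> 'd \<Rightarrow> 'a::comm_monoid_add"
  shows "(\<Sum>i\<in>UNIV. \<Sum>j\<in>UNIV. if i = j then 0 else (if k = j \<and> l = i then f i j else 0)) = (if k = l then 0 else f l k)"
proof -
  have "(\<Sum>j\<in>UNIV. if i = j then 0 else (if k = j \<and> l = i then f i j else 0)) = (if i = l then (if k = l then 0 else f l k) else 0)" for i
  proof -
    have "(\<Sum>j\<in>UNIV. if i = j then 0 else (if k = j \<and> l = i then f i j else 0)) = (\<Sum>j\<in>UNIV. if j = k then (if i = l \<and> i \<noteq> k then f i k else 0) else 0)"
      by (rule sum.cong) auto
    then show ?thesis by simp
  qed
  then show ?thesis by simp
qed

lemma L3: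
  fixes g :: "'d::finite \<Rightarrow> 'd \<Rightarrow> 'a::comm_monoid_add"
  shows "(\<Sum>i\<in>UNIV. \<Sum>j\<in>UNIV. if i = j then 0 else (if k = i then g i j else 0)) = (\<Sum>j\<in>UNIV-{k}. g k j)"
proof -
  have "(\<Sum>j\<in>UNIV. if i = j then 0 else (if k = i then g i j else 0)) = (if i = k then (\<Sum>j\<in>UNIV-{k}. g k j) else 0)" for i
    by (auto simp: sum.If_cases Compl_eq_Diff_UNIV)
  then show ?thesis by simp
qed

lemma L4:
  fixes g :: "'d::finite \<Rightarrow> 'd \<Rightarrow> 'a::comm_monoid_add"
  shows "(\<Sum>i\<in>UNIV. \<Sum>j\<in>UNIV. if i = j then 0 else (if k = j then g i j else 0)) = (\<Sum>i\<in>UNIV-{k}. g i k)"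
proof -
  have "(\<Sum>j\<in>UNIV. if i = j then 0 else (if k = j then g i j else 0)) = (if i = k then 0 else g i k)" for i
  proof -
    have "(\<Sum>j\<in>UNIV. if i = j then 0 else (if k = j then g i j else 0)) = (\<Sum>j\<in>UNIV. if j = k then (if i = k then 0 else g i k) else 0)"
      by (rule sum.cong) auto
    then show ?thesis by simp
  qed
  then show ?thesis by (simp add: sum.If_cases Compl_eq_Diff_UNIV)
qed



lemma ifz_mult:
  "(if P then x else 0) * y = (if P then x * y else (0::'a::mult_zero))"
  "y * (if P then x else 0) = (if P then y * x else (0::'a::mult_zero))"
  "cnj (if P then z else 0) = (if P then cnj z else 0)"
  by auto

lemma dsum_delta:
  fixes f :: "'d::finite \<Rightarrow> 'd \<Rightarrow> 'a::comm_monoid_add"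
  shows "(\<Sum>k\<in>UNIV. \<Sum>l\<in>UNIV. if k = p \<and> l = q then f k l else 0) = f p q"
proof -
  have "(\<Sum>l\<in>UNIV. if k = p \<and> l = q then f k l else 0) = (if k = p then f k q else 0)" for k
    by (cases "k = p") auto
  then show ?thesis by simp
qed

lemma quad2:
  fixes B :: "complex^'d^'d::finite"
  assumes "i \<noteq> j"
  shows "(\<Sum>k\<in>UNIV. \<Sum>l\<in>UNIV. cnj (((\<chi> m. (if m = i then a else 0) + (if m = j then b else 0))::complex^'d)$k) * B$k$l * (\<chi> m. (if m = i then a else 0) + (if m = j then b else 0))$l)
    = cnj a * B$i$i * a + cnj a * B$i$j * b + cnj b * B$j$i * a + cnj b * B$j$j * b"
proof -
  have e: "cnj (((\<chi> m. (if m = i then a else 0) + (if m = j then b else 0))::complex^'d)$k) * B$k$l * (\<chi> m. (if m = i then a else 0) + (if m = j then b else 0))$l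
    = (if k = i \<and> l = i then cnj a * B$k$l * a else 0) + (if k = i \<and> l = j then cnj a * B$k$l * b else 0)
     + (if k = j \<and> l = i then cnj b * B$k$l * a else 0) + (if k = j \<and> l = j then cnj b * B$k$l * b else 0)" for k l
    using assms by auto
  show ?thesis unfolding e sum.distrib dsum_delta ..
qed

lemma psd_herm:
  fixes B :: "complex^'d^'d::finite"
  assumes "psd B" "\<forall>i. B$i$i \<in> \<real>"
  shows "B$j$i = cnj (B$i$j)"
proof (cases "i = j")
  case True
  then show ?thesis using assms(2) by (metis Reals_cnj_iff)
next
  case False
  let ?x = "\<lambda>a b. (\<chi> m. (if m = i then a else 0) + (if m = j then b else 0))::complex^'d"
  have "(\<Sum>k\<in>UNIV. \<Sum>l\<in>UNIV. cnj ((?x 1 1)$k) * B$k$l * (?x 1 1)$l) \<in> \<real>"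
    using assms(1) unfolding psd_def Let_def by blast
  then have h1: "B$i$i + B$i$j + B$j$i + B$j$j \<in> \<real>" using quad2[OF False, of 1 1 B] by simp
  have "(\<Sum>k\<in>UNIV. \<Sum>l\<in>UNIV. cnj ((?x 1 \<i>)$k) * B$k$l * (?x 1 \<i>)$l) \<in> \<real>"
    using assms(1) unfolding psd_def Let_def by blast
  then have h2: "cnj 1 * B$i$i * 1 + cnj 1 * B$i$j * \<i> + cnj \<i> * B$j$i * 1 + cnj \<i> * B$j$j * \<i> \<in> \<real>" using quad2[OF False, of 1 \<i> B] by simp
  have ri: "Im (B$i$i) = 0" "Im (B$j$j) = 0" using assms(2) by (auto simp: complex_is_Real_iff)
  have "Im (B$i$j) + Im (B$j$i) = 0" using h1 ri by (simp add: complex_is_Real_iff)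
  moreover have "Re (B$i$j) - Re (B$j$i) = 0" using h2 ri by (simp add: complex_is_Real_iff)
  ultimately show ?thesis by (simp add: complex_eq_iff)
qed



lemma free_term:
  assumes "i \<noteq> j" "c \<ge> 0"
  shows "PCP2 ((\<chi> k l. if k = i \<and> l = j then complex_of_real c else 0)::complex^'d::finite^'d) 0"
proof -
  define v :: "complex^'d" where "v = (\<chi> m. if m = i then complex_of_real (sqrt c) else 0)"
  define w :: "complex^'d" where "w = (\<chi> m. if m = j then 1 else 0)"
  have hz: "hadamard v w = 0" using assms(1) unfolding v_def w_def hadamard_def by (auto simp: vec_eq_iff)
  have s: "sigma (hadamard v w) \<le> 2" unfolding hz sigma_def by simp
  have "outer (hadamard v (vconj v)) (hadamard w (vconj w)) = (\<chi> k l. if k = i \<and> l = j then complex_of_real c else 0)"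
    using assms unfolding vec_eq_iff outerA_entry by (auto simp: v_def w_def simp flip: of_real_power)
  moreover have "outer (hadamard v w) (hadamard v w) = 0" unfolding hz by (simp add: outer_def vec_eq_iff)
  ultimately show ?thesis using PCP2_single[OF s] by simp
qed

lemma diag_term:
  assumes "r \<ge> 0"
  shows "PCP2 ((\<chi> k l. if k = i \<and> l = i then complex_of_real r else 0)::complex^'d::finite^'d)
              (\<chi> k l. if k = i \<and> l = i then complex_of_real r else 0)"
proof -
  define v :: "complex^'d" where "v = (\<chi> m. if m = i then complex_of_real (sqrt r) else 0)"
  define w :: "complex^'d" where "w = (\<chi> m. if m = i then 1 else 0)"
  have s: "sigma (hadamard v w) \<le> 2" by (rule sigma_le2[of _ i i]) (auto simp: v_def w_def hadamard_def split: if_splits)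
  have "outer (hadamard v (vconj v)) (hadamard w (vconj w)) = (\<chi> k l. if k = i \<and> l = i then complex_of_real r else 0)"
    using assms unfolding vec_eq_iff outerA_entry by (auto simp: v_def w_def simp flip: of_real_power)
  moreover have "outer (hadamard v w) (hadamard v w) = (\<chi> k l. if k = i \<and> l = i then complex_of_real r else 0)"
    using assms unfolding vec_eq_iff outerB_entry by (auto simp: v_def w_def simp flip: of_real_mult)
  ultimately show ?thesis using PCP2_single[OF s] by simp
qed



lemma of_real_if: "complex_of_real (if P then x else 0) = (if P then complex_of_real x else 0)"
  by simp

lemma main_term:
  fixes \<gamma> :: complex
  assumes ij: "i \<noteq> j" and a0: "\<alpha> > 0" and b0: "\<beta> \<ge> 0" and g0: "\<gamma> \<noteq> 0"
    and ab: "\<alpha> * \<beta> \<ge> (cmod \<gamma>)\<^sup>2"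
  shows "PCP2 ((\<chi> k l. (if k = i \<and> l = j then complex_of_real (\<alpha>/2) else 0) + (if k = j \<and> l = i then complex_of_real (\<beta>/2) else 0)
                     + (if k = l \<and> k = i then complex_of_real (cmod \<gamma>/2) else 0) + (if k = l \<and> k = j then complex_of_real (cmod \<gamma>/2) else 0))::complex^'d::finite^'d)
              (\<chi> k l. (if k = i \<and> l = j then \<gamma>/2 else 0) + (if k = j \<and> l = i then cnj \<gamma>/2 else 0)
                     + (if k = l \<and> k = i then complex_of_real (cmod \<gamma>/2) else 0) + (if k = l \<and> k = j then complex_of_real (cmod \<gamma>/2) else 0))"
proof -
  define n where "n = cmod \<gamma>"
  have n0: "n > 0" using g0 by (simp add: n_def)
  define s where "s = sqrt (n/2)"
  define t where "t = cnj \<gamma> / complex_of_real (2* s)"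
  define d where "d = sqrt (\<alpha>/2)"
  define b where "b = t / complex_of_real d"
  have s0: "s > 0" using n0 by (simp add: s_def)
  have s2: "s\<^sup>2 = n/2" using n0 by (simp add: s_def)
  have d0: "d > 0" using a0 by (simp add: d_def)
  have d2: "d\<^sup>2 = \<alpha>/2" using a0 by (simp add: d_def)
  have ct: "cmod t = n/(2* s)" using s0 by (simp add: t_def n_def norm_divide)
  have ct2: "(cmod t)\<^sup>2 = n/2"
  proof -
    have "(cmod t)\<^sup>2 = n\<^sup>2/(4* s\<^sup>2)" unfolding ct by (simp add: power2_eq_square)
    also have "\<dots> = n/2" using n0 unfolding s2 by (simp add: power2_eq_square)
    finally show ?thesis .
  qed
  have cb: "cmod b = cmod t / d" using d0 by (simp add: b_def norm_divide)
  have cb2s: "(cmod b)\<^sup>2 * s\<^sup>2 = n\<^sup>2/(2*\<alpha>)"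
    using a0 unfolding cb power_divide ct2 d2 s2 by (simp add: power2_eq_square)
  have cb2d: "(cmod b)\<^sup>2 * d\<^sup>2 = n/2"
    using d0 unfolding cb power_divide ct2 by simp
  have bd: "b * complex_of_real d = t" using d0 by (simp add: b_def)
  have st: "complex_of_real s * cnj t = \<gamma>/2" using s0 by (simp add: t_def field_simps)
  have ts: "t * complex_of_real s = cnj \<gamma>/2" using s0 by (simp add: t_def field_simps)
  have tt: "t * cnj t = complex_of_real (n/2)" proof -
    have "t * cnj t = complex_of_real ((cmod t)\<^sup>2)" by (simp add: complex_norm_square[symmetric])
    then show ?thesis unfolding ct2 .
  qed
  have rem: "\<beta>/2 - n\<^sup>2/(2*\<alpha>) \<ge> 0"
  proof -
    have "n\<^sup>2/\<alpha> \<le> \<beta>" using ab a0 by (simp add: n_def field_simps mult.commute)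
    then show ?thesis by (simp add: field_simps)
  qed
  define v :: "complex^'d" where "v = (\<chi> m. if m = i then 1 else if m = j then b else 0)"
  define w :: "complex^'d" where "w = (\<chi> m. if m = i then complex_of_real s else if m = j then complex_of_real d else 0)"
  have sg: "sigma (hadamard v w) \<le> 2"
    by (rule sigma_le2[of _ i j]) (auto simp: v_def w_def hadamard_def split: if_splits)
  have vi: "v$i = 1" "v$j = b" "\<And>k. k \<noteq> i \<Longrightarrow> k \<noteq> j \<Longrightarrow> v$k = 0" using ij by (auto simp: v_def)
  have wi: "w$i = complex_of_real s" "w$j = complex_of_real d" "\<And>k. k \<noteq> i \<Longrightarrow> k \<noteq> j \<Longrightarrow> w$k = 0" using ij by (auto simp: w_def)
  define F :: "complex^'d^'d" where "F = (\<chi> k l. if k = j \<and> l = i then complex_of_real (\<beta>/2 - n\<^sup>2/(2*\<alpha>)) else 0)"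
  have PF: "PCP2 F 0" unfolding F_def by (rule free_term[OF ij[symmetric] rem])
  have PT: "PCP2 (outer (hadamard v (vconj v)) (hadamard w (vconj w))) (outer (hadamard v w) (hadamard v w))"
    by (rule PCP2_single[OF sg])
  have cv: "cmod (v$i) = 1" "cmod (v$j) = cmod b" "\<And>k. k \<noteq> i \<Longrightarrow> k \<noteq> j \<Longrightarrow> cmod (v$k) = 0"
    using vi by auto
  have cw: "cmod (w$i) = s" "cmod (w$j) = d" "\<And>k. k \<noteq> i \<Longrightarrow> k \<noteq> j \<Longrightarrow> cmod (w$k) = 0"
    using wi s0 d0 by auto
  have realA: "(cmod (v$k))\<^sup>2 * (cmod (w$l))\<^sup>2 + (if k = j \<and> l = i then \<beta>/2 - n\<^sup>2/(2*\<alpha>) else 0) =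
       (if k = i \<and> l = j then \<alpha>/2 else 0) + (if k = j \<and> l = i then \<beta>/2 else 0)
                     + (if k = l \<and> k = i then n/2 else 0) + (if k = l \<and> k = j then n/2 else 0)" for k l
    using ij apply (cases "k = i"; cases "k = j"; cases "l = i"; cases "l = j")
    apply (simp_all add: cv cw)
    using s2 d2 cb2s cb2d by linarith+
  have eqA: "outer (hadamard v (vconj v)) (hadamard w (vconj w)) + F =
     ((\<chi> k l. (if k = i \<and> l = j then complex_of_real (\<alpha>/2) else 0) + (if k = j \<and> l = i then complex_of_real (\<beta>/2) else 0)
                     + (if k = l \<and> k = i then complex_of_real (cmod \<gamma>/2) else 0) + (if k = l \<and> k = j then complex_of_real (cmod \<gamma>/2) else 0)))"
  proof -
    have "(outer (hadamard v (vconj v)) (hadamard w (vconj w)) + F)$k$l =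
       complex_of_real ((if k = i \<and> l = j then \<alpha>/2 else 0) + (if k = j \<and> l = i then \<beta>/2 else 0)
                     + (if k = l \<and> k = i then n/2 else 0) + (if k = l \<and> k = j then n/2 else 0))" for k l
    proof -
      have "(outer (hadamard v (vconj v)) (hadamard w (vconj w)) + F)$k$l =
         complex_of_real ((cmod (v$k))\<^sup>2 * (cmod (w$l))\<^sup>2 + (if k = j \<and> l = i then \<beta>/2 - n\<^sup>2/(2*\<alpha>) else 0))"
        unfolding F_def by (simp add: outerA_entry)
      then show ?thesis unfolding realA .
    qed
    then have "(outer (hadamard v (vconj v)) (hadamard w (vconj w)) + F)$k$l =
       (if k = i \<and> l = j then complex_of_real (\<alpha>/2) else 0) + (if k = j \<and> l = i then complex_of_real (\<beta>/2) else 0)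
                     + (if k = l \<and> k = i then complex_of_real (cmod \<gamma>/2) else 0) + (if k = l \<and> k = j then complex_of_real (cmod \<gamma>/2) else 0)" for k l
      unfolding of_real_add of_real_if n_def by simp
    then show ?thesis unfolding vec_eq_iff vec_lambda_beta by blast
  qed
  have hx: "hadamard v w $ i = complex_of_real s" "hadamard v w $ j = t" "\<And>k. k \<noteq> i \<Longrightarrow> k \<noteq> j \<Longrightarrow> hadamard v w $ k = 0"
    using vi wi bd by (auto simp: hadamard_def)
  have ss: "complex_of_real s * cnj (complex_of_real s) = complex_of_real (n/2)"
    by (metis s2 complex_cnj_complex_of_real of_real_mult power2_eq_square)
  have ts': "t * cnj (complex_of_real s) = cnj \<gamma>/2" using ts by simp
  have eqB: "outer (hadamard v w) (hadamard v w) + 0 =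
     (\<chi> k l. (if k = i \<and> l = j then \<gamma>/2 else 0) + (if k = j \<and> l = i then cnj \<gamma>/2 else 0)
                     + (if k = l \<and> k = i then complex_of_real (cmod \<gamma>/2) else 0) + (if k = l \<and> k = j then complex_of_real (cmod \<gamma>/2) else 0))"
  proof -
    have "(outer (hadamard v w) (hadamard v w))$k$l =
       (if k = i \<and> l = j then \<gamma>/2 else 0) + (if k = j \<and> l = i then cnj \<gamma>/2 else 0)
                     + (if k = l \<and> k = i then complex_of_real (n/2) else 0) + (if k = l \<and> k = j then complex_of_real (n/2) else 0)" for k l
    proof -
      have e: "(outer (hadamard v w) (hadamard v w))$k$l = hadamard v w $ k * cnj (hadamard v w $ l)"
        by (simp add: outer_def)
      show ?thesis unfolding e
        using ij apply (cases "k = i"; cases "k = j"; cases "l = i"; cases "l = j")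
        apply (simp_all only: hx)
        using ss st ts' tt by simp_all
    qed
    then show ?thesis unfolding vec_eq_iff vec_lambda_beta n_def by simp
  qed
  show ?thesis using PCP2_add[OF PT PF] unfolding eqA eqB .
qed



lemma pair_term:
  fixes \<gamma> :: complex
  assumes ij: "i \<noteq> j" and a0: "\<alpha> \<ge> 0" and b0: "\<beta> \<ge> 0"
    and ab: "\<alpha> * \<beta> \<ge> (cmod \<gamma>)\<^sup>2"
  shows "PCP2 ((\<chi> k l. (if k = i \<and> l = j then complex_of_real (\<alpha>/2) else 0) + (if k = j \<and> l = i then complex_of_real (\<beta>/2) else 0)
                     + (if k = l \<and> k = i then complex_of_real (cmod \<gamma>/2) else 0) + (if k = l \<and> k = j then complex_of_real (cmod \<gamma>/2) else 0))::complex^'d::finite^'d)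
              (\<chi> k l. (if k = i \<and> l = j then \<gamma>/2 else 0) + (if k = j \<and> l = i then cnj \<gamma>/2 else 0)
                     + (if k = l \<and> k = i then complex_of_real (cmod \<gamma>/2) else 0) + (if k = l \<and> k = j then complex_of_real (cmod \<gamma>/2) else 0))"
proof (cases "\<gamma> = 0")
  case True
  have P: "PCP2 (((\<chi> k l. if k = i \<and> l = j then complex_of_real (\<alpha>/2) else 0)::complex^'d^'d)
      + (\<chi> k l. if k = j \<and> l = i then complex_of_real (\<beta>/2) else 0)) (0 + 0)"
    using free_term[OF ij, of "\<alpha>/2"] free_term[OF ij[symmetric], of "\<beta>/2"] a0 b0
    by (intro PCP2_add) auto
  have e1: "((\<chi> k l. if k = i \<and> l = j then complex_of_real (\<alpha>/2) else 0)::complex^'d^'d)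
      + (\<chi> k l. if k = j \<and> l = i then complex_of_real (\<beta>/2) else 0) =
     (\<chi> k l. (if k = i \<and> l = j then complex_of_real (\<alpha>/2) else 0) + (if k = j \<and> l = i then complex_of_real (\<beta>/2) else 0)
                     + (if k = l \<and> k = i then complex_of_real (cmod \<gamma>/2) else 0) + (if k = l \<and> k = j then complex_of_real (cmod \<gamma>/2) else 0))"
  proof (rule vec_eq_iff[THEN iffD2], intro allI, rule vec_eq_iff[THEN iffD2], intro allI)
    fix k l
    show "(((\<chi> k l. if k = i \<and> l = j then complex_of_real (\<alpha>/2) else 0)::complex^'d^'d)
      + (\<chi> k l. if k = j \<and> l = i then complex_of_real (\<beta>/2) else 0)) $ k $ l =
     (\<chi> k l. (if k = i \<and> l = j then complex_of_real (\<alpha>/2) else 0) + (if k = j \<and> l = i then complex_of_real (\<beta>/2) else 0)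
                     + (if k = l \<and> k = i then complex_of_real (cmod \<gamma>/2) else 0) + (if k = l \<and> k = j then complex_of_real (cmod \<gamma>/2) else 0)) $ k $ l"
      unfolding True by (simp only: vector_add_component vec_lambda_beta norm_zero div_0 of_real_0 if_cancel add_0_right)
  qed
  have e2: "(0::complex^'d^'d) + 0 = (\<chi> k l. (if k = i \<and> l = j then \<gamma>/2 else 0) + (if k = j \<and> l = i then cnj \<gamma>/2 else 0)
                     + (if k = l \<and> k = i then complex_of_real (cmod \<gamma>/2) else 0) + (if k = l \<and> k = j then complex_of_real (cmod \<gamma>/2) else 0))"
  proof (rule vec_eq_iff[THEN iffD2], intro allI, rule vec_eq_iff[THEN iffD2], intro allI)
    fix k l
    show "((0::complex^'d^'d) + 0) $ k $ l = (\<chi> k l. (if k = i \<and> l = j then \<gamma>/2 else 0) + (if k = j \<and> l = i then cnj \<gamma>/2 else 0)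
                     + (if k = l \<and> k = i then complex_of_real (cmod \<gamma>/2) else 0) + (if k = l \<and> k = j then complex_of_real (cmod \<gamma>/2) else 0)) $ k $ l"
      unfolding True by (simp only: vector_add_component zero_index vec_lambda_beta norm_zero div_0 of_real_0 complex_cnj_zero if_cancel add_0_right)
  qed
  show ?thesis using P unfolding e1 e2 .
next
  case False
  have "\<alpha> \<noteq> 0" using False ab by auto
  then have "\<alpha> > 0" using a0 by simp
  then show ?thesis using main_term[OF ij _ b0 False ab] by blast
qed



theorem lemma3p8:
  fixes A B :: "complex^'d^'d::finite"
  assumes "\<forall>i. A$i$i = B$i$i"
    and "nonneg_entrywise A"
    and "psd B"
    and "\<forall>i j. Re (A$i$j) * Re (A$j$i) \<ge> (cmod (B$i$j))\<^sup>2"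
    and "diag_dominant B"
  shows "PCP2 A B"
proof -
  have Areal: "A$i$j \<in> \<real>" "Re (A$i$j) \<ge> 0" for i j using assms(2) unfolding nonneg_entrywise_def by auto
  have Bre: "\<forall>i. B$i$i \<in> \<real>" using Areal(1) assms(1) by metis
  have herm: "B$j$i = cnj (B$i$j)" for i j using psd_herm[OF assms(3) Bre] .
  define \<alpha> where "\<alpha> i j = Re (A$i$j)" for i j
  have Aeq: "A$i$j = complex_of_real (\<alpha> i j)" for i j
    using Areal(1)[of i j] unfolding \<alpha>_def by (simp add: complex_is_Real_iff complex_eq_iff)
  have \<alpha>0: "\<alpha> i j \<ge> 0" for i j using Areal(2) unfolding \<alpha>_def by simp
  have \<alpha>\<alpha>: "\<alpha> i j * \<alpha> j i \<ge> (cmod (B$i$j))\<^sup>2" for i j using assms(4) unfolding \<alpha>_def by simp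
  have Bii: "B$i$i = complex_of_real (\<alpha> i i)" for i using Aeq assms(1) by metis
  define PA where "PA i j = (if i = j then 0 else
     ((\<chi> k l. (if k = i \<and> l = j then complex_of_real (\<alpha> i j/2) else 0) + (if k = j \<and> l = i then complex_of_real (\<alpha> j i/2) else 0)
                     + (if k = l \<and> k = i then complex_of_real (cmod (B$i$j)/2) else 0) + (if k = l \<and> k = j then complex_of_real (cmod (B$i$j)/2) else 0))::complex^'d^'d))" for i j
  define PB where "PB i j = (if i = j then 0 else
     ((\<chi> k l. (if k = i \<and> l = j then B$i$j/2 else 0) + (if k = j \<and> l = i then cnj (B$i$j)/2 else 0)
                     + (if k = l \<and> k = i then complex_of_real (cmod (B$i$j)/2) else 0) + (if k = l \<and> k = j then complex_of_real (cmod (B$i$j)/2) else 0))::complex^'d^'d))" for i j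
  have PP: "PCP2 (PA i j) (PB i j)" for i j
  proof (cases "i = j")
    case True then show ?thesis unfolding PA_def PB_def using PCP2_zero by simp
  next
    case False then show ?thesis unfolding PA_def PB_def using pair_term[OF False \<alpha>0 \<alpha>0 \<alpha>\<alpha>] by simp
  qed
  define r where "r i = \<alpha> i i - (\<Sum>j\<in>UNIV-{i}. cmod (B$i$j)/2) - (\<Sum>j\<in>UNIV-{i}. cmod (B$j$i)/2)" for i
  have r0: "r i \<ge> 0" for i
  proof -
    have c: "cmod (B$i$i) = \<alpha> i i" using Bii \<alpha>0 by simp
    have "(\<Sum>j\<in>UNIV-{i}. cmod (B$i$j)) \<le> \<alpha> i i" "(\<Sum>j\<in>UNIV-{i}. cmod (B$j$i)) \<le> \<alpha> i i"
      using assms(5) c unfolding diag_dominant_def by metis+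
    then show ?thesis unfolding r_def sum_divide_distrib[symmetric] by linarith
  qed
  define D where "D i = ((\<chi> k l. if k = i \<and> l = i then complex_of_real (r i) else 0)::complex^'d^'d)" for i
  have PD: "PCP2 (D i) (D i)" for i unfolding D_def by (rule diag_term[OF r0])
  have P: "PCP2 (sum D UNIV + (\<Sum>i\<in>UNIV. \<Sum>j\<in>UNIV. PA i j)) (sum D UNIV + (\<Sum>i\<in>UNIV. \<Sum>j\<in>UNIV. PB i j))"
    by (intro PCP2_add PCP2_sum PD PP) auto
  have Dk: "(sum D UNIV)$k$l = (if k = l then complex_of_real (r k) else 0)" for k l
  proof -
    have "(sum D UNIV)$k$l = (\<Sum>i\<in>UNIV. D i $k$l)" by (simp add: sum_component)
    also have "\<dots> = (\<Sum>i\<in>UNIV. if i = k then (if k = l then complex_of_real (r k) else 0) else 0)"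
      by (rule sum.cong) (auto simp: D_def)
    finally show ?thesis by simp
  qed
  have PAe: "PA i j $k$l = (if i = j then 0 else (if k = i \<and> l = j then complex_of_real (\<alpha> i j/2) else 0))
     + (if i = j then 0 else (if k = j \<and> l = i then complex_of_real (\<alpha> j i/2) else 0))
     + (if i = j then 0 else (if k = i then (if k = l then complex_of_real (cmod (B$i$j)/2) else 0) else 0))
     + (if i = j then 0 else (if k = j then (if k = l then complex_of_real (cmod (B$i$j)/2) else 0) else 0))" for i j k l
    unfolding PA_def by (cases "i = j") auto
  have PBe: "PB i j $k$l = (if i = j then 0 else (if k = i \<and> l = j then B$i$j/2 else 0))
     + (if i = j then 0 else (if k = j \<and> l = i then cnj (B$i$j)/2 else 0))
     + (if i = j then 0 else (if k = i then (if k = l then complex_of_real (cmod (B$i$j)/2) else 0) else 0))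
     + (if i = j then 0 else (if k = j then (if k = l then complex_of_real (cmod (B$i$j)/2) else 0) else 0))" for i j k l
    unfolding PB_def by (cases "i = j") auto
  have SA: "(\<Sum>i\<in>UNIV. \<Sum>j\<in>UNIV. PA i j)$k$l = (if k = l then 0 else complex_of_real (\<alpha> k l/2))
     + (if k = l then 0 else complex_of_real (\<alpha> k l/2))
     + (\<Sum>j\<in>UNIV-{k}. if k = l then complex_of_real (cmod (B$k$j)/2) else 0)
     + (\<Sum>i\<in>UNIV-{k}. if k = l then complex_of_real (cmod (B$i$k)/2) else 0)" for k l
  proof -
    have "(\<Sum>i\<in>UNIV. \<Sum>j\<in>UNIV. PA i j)$k$l = (\<Sum>i\<in>UNIV. \<Sum>j\<in>UNIV. PA i j $k$l)" by (simp add: sum_component)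
    then show ?thesis unfolding PAe sum.distrib L1 L2 L3 L4 .
  qed
  have SB: "(\<Sum>i\<in>UNIV. \<Sum>j\<in>UNIV. PB i j)$k$l = (if k = l then 0 else B$k$l/2)
     + (if k = l then 0 else cnj (B$l$k)/2)
     + (\<Sum>j\<in>UNIV-{k}. if k = l then complex_of_real (cmod (B$k$j)/2) else 0)
     + (\<Sum>i\<in>UNIV-{k}. if k = l then complex_of_real (cmod (B$i$k)/2) else 0)" for k l
  proof -
    have "(\<Sum>i\<in>UNIV. \<Sum>j\<in>UNIV. PB i j)$k$l = (\<Sum>i\<in>UNIV. \<Sum>j\<in>UNIV. PB i j $k$l)" by (simp add: sum_component)
    then show ?thesis unfolding PBe sum.distrib L1 L2 L3 L4 .
  qed
  have eA: "A = sum D UNIV + (\<Sum>i\<in>UNIV. \<Sum>j\<in>UNIV. PA i j)"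
  proof (rule vec_eq_iff[THEN iffD2], intro allI, rule vec_eq_iff[THEN iffD2], intro allI)
    fix k l
    show "A$k$l = (sum D UNIV + (\<Sum>i\<in>UNIV. \<Sum>j\<in>UNIV. PA i j))$k$l"
    proof (cases "k = l")
      case True
      have "(sum D UNIV + (\<Sum>i\<in>UNIV. \<Sum>j\<in>UNIV. PA i j))$k$l = complex_of_real (r k + (\<Sum>j\<in>UNIV-{k}. cmod (B$k$j)/2) + (\<Sum>j\<in>UNIV-{k}. cmod (B$j$k)/2))"
        unfolding vector_add_component Dk SA using True by simp
      also have "\<dots> = A$k$l" unfolding r_def Aeq True by simp
      finally show ?thesis ..
    next
      case False
      have "(sum D UNIV + (\<Sum>i\<in>UNIV. \<Sum>j\<in>UNIV. PA i j))$k$l = complex_of_real (\<alpha> k l/2) + complex_of_real (\<alpha> k l/2)"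
        unfolding vector_add_component Dk SA using False by simp
      also have "\<dots> = A$k$l" unfolding Aeq by (simp flip: of_real_add)
      finally show ?thesis ..
    qed
  qed
  have eB: "B = sum D UNIV + (\<Sum>i\<in>UNIV. \<Sum>j\<in>UNIV. PB i j)"
  proof (rule vec_eq_iff[THEN iffD2], intro allI, rule vec_eq_iff[THEN iffD2], intro allI)
    fix k l
    show "B$k$l = (sum D UNIV + (\<Sum>i\<in>UNIV. \<Sum>j\<in>UNIV. PB i j))$k$l"
    proof (cases "k = l")
      case True
      have "(sum D UNIV + (\<Sum>i\<in>UNIV. \<Sum>j\<in>UNIV. PB i j))$k$l = complex_of_real (r k + (\<Sum>j\<in>UNIV-{k}. cmod (B$k$j)/2) + (\<Sum>j\<in>UNIV-{k}. cmod (B$j$k)/2))"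
        unfolding vector_add_component Dk SB using True by simp
      also have "\<dots> = B$k$l" unfolding r_def Bii True by simp
      finally show ?thesis ..
    next
      case False
      have "(sum D UNIV + (\<Sum>i\<in>UNIV. \<Sum>j\<in>UNIV. PB i j))$k$l = B$k$l/2 + cnj (B$l$k)/2"
        unfolding vector_add_component Dk SB using False by simp
      also have "\<dots> = B$k$l" using herm[of k l] by simp
      finally show ?thesis ..
    qed
  qed
  show ?thesis using P unfolding eA[symmetric] eB[symmetric] .
qed

end
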